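(* Let $\mathbf{k}$ be algebraically closed of characteristic $2$, $V$ a $2n$-dimensional $\mathbf{k}$-vector space with nondegenerate symplectic form $\langle,\rangle$, $G=Sp(V)$, $\mathfrak g=\mathfrak{sp}(V)$. Let $\mathcal F^G$ be the set of complete flags $0=V_0\subset V_1\subset\dots\subset V_{2n}=V$ with $V_{2n-i}=V_i^\perp$ and $\langle,\rangle|_{V_i}=0$ for $i\le n$; it is identified with the variety of Borel subgroups of $G$ by sending a flag to its stabilizer $B$. Then for $\xi\in\mathcal N_{\mathfrak g^*}$ and a flag $F=(V_i)\in\mathcal F^G$ with stabilizer $B$ (Lie algebra $\mathfrak b$), we have $\xi(\mathfrak b)=0$ if and only if $\beta_\xi(V_i,V_{2n+1-i})=0$ and $\alpha_\xi(V_i)=0$ for all $i\le n$. Thus the Springer fiber $\mathcal B^G_\xi$ is identified with $\mathcal F^G_\xi=\{F\in\mathcal F^G:\beta_\xi(V_i,V_{2n+1-i})=0,\ \alpha_\xi(V_i)=0\ \forall i\le n\}$.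
   Context: For $\xi\in\mathfrak g^*$ choose $X\in\mathfrak{gl}(V)$ with $\xi(x)=\mathrm{tr}(Xx)$ for all $x\in\mathfrak g$; $\alpha_\xi(v)=\langle v,Xv\rangle$ is a well-defined quadratic form on $V$, and $\beta_\xi(v,w)=\alpha_\xi(v+w)-\alpha_\xi(v)-\alpha_\xi(w)$. $\mathcal N_{\mathfrak g^*}$ is the set of $\xi\in\mathfrak g^*$ vanishing on the Lie algebra of some Borel subgroup; the Springer fiber $\mathcal B^G_\xi$ is the set of Borel subgroups $B$ with $\xi(\mathrm{Lie}\,B)=0$. *)

theory Defs
  imports "HOL-Analysis.Analysis" "HOL-Computational_Algebra.Polynomial"
begin

definition bilinear_form :: "('k::field^'n \<Rightarrow> 'k^'n \<Rightarrow> 'k) \<Rightarrow> bool" where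
  "bilinear_form B \<longleftrightarrow>
     (\<forall>u v w. B (u + v) w = B u w + B v w) \<and>
     (\<forall>u v w. B u (v + w) = B u v + B u w) \<and>
     (\<forall>c v w. B (c *s v) w = c * B v w) \<and>
     (\<forall>c v w. B v (c *s w) = c * B v w)"

definition symplectic_form :: "('k::field^'n \<Rightarrow> 'k^'n \<Rightarrow> 'k) \<Rightarrow> bool" where
  "symplectic_form B \<longleftrightarrow> bilinear_form B \<and> (\<forall>v. B v v = 0) \<and>
     (\<forall>v. (\<forall>w. B v w = 0) \<longrightarrow> v = 0)"

definition perp :: "('k::field^'n \<Rightarrow> 'k^'n \<Rightarrow> 'k) \<Rightarrow> ('k^'n) set \<Rightarrow> ('k^'n) set" where
  "perp B S = {w. \<forall>v\<in>S. B v w = 0}"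

definition sp_alg :: "('k::field^'n \<Rightarrow> 'k^'n \<Rightarrow> 'k) \<Rightarrow> ('k^'n^'n) set" where
  "sp_alg B = {x. \<forall>v w. B (x *v v) w + B v (x *v w) = 0}"

definition mat_scale :: "'k::field \<Rightarrow> 'k^'n^'n \<Rightarrow> 'k^'n^'n" where
  "mat_scale c x = (\<chi> i j. c * x $ i $ j)"

text \<open>Elements of the dual g^* (functions considered only on g).\<close>
definition dual_elem :: "('k::field^'n \<Rightarrow> 'k^'n \<Rightarrow> 'k) \<Rightarrow> ('k^'n^'n \<Rightarrow> 'k) \<Rightarrow> bool" where
  "dual_elem B \<xi> \<longleftrightarrow>
     (\<forall>x\<in>sp_alg B. \<forall>y\<in>sp_alg B. \<xi> (x + y) = \<xi> x + \<xi> y) \<and>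
     (\<forall>c. \<forall>x\<in>sp_alg B. \<xi> (mat_scale c x) = c * \<xi> x)"

definition trace_rep :: "('k::field^'n \<Rightarrow> 'k^'n \<Rightarrow> 'k) \<Rightarrow> ('k^'n^'n \<Rightarrow> 'k) \<Rightarrow> 'k^'n^'n" where
  "trace_rep B \<xi> = (SOME X. \<forall>x\<in>sp_alg B. \<xi> x = trace (X ** x))"

definition alpha :: "('k::field^'n \<Rightarrow> 'k^'n \<Rightarrow> 'k) \<Rightarrow> ('k^'n^'n \<Rightarrow> 'k) \<Rightarrow> 'k^'n \<Rightarrow> 'k" where
  "alpha B \<xi> v = B v (trace_rep B \<xi> *v v)"

definition beta :: "('k::field^'n \<Rightarrow> 'k^'n \<Rightarrow> 'k) \<Rightarrow> ('k^'n^'n \<Rightarrow> 'k) \<Rightarrow> 'k^'n \<Rightarrow> 'k^'n \<Rightarrow> 'k" where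
  "beta B \<xi> v w = alpha B \<xi> (v + w) - alpha B \<xi> v - alpha B \<xi> w"

definition iso_flag :: "('k::field^'n \<Rightarrow> 'k^'n \<Rightarrow> 'k) \<Rightarrow> nat \<Rightarrow> (nat \<Rightarrow> ('k^'n) set) \<Rightarrow> bool" where
  "iso_flag B m F \<longleftrightarrow>
     F 0 = {0} \<and> F (2*m) = UNIV \<and>
     (\<forall>i\<le>2*m. vec.subspace (F i) \<and> vec.dim (F i) = i) \<and>
     (\<forall>i<2*m. F i \<subset> F (Suc i)) \<and>
     (\<forall>i\<le>2*m. F (2*m - i) = perp B (F i)) \<and>
     (\<forall>i\<le>m. \<forall>v\<in>F i. \<forall>w\<in>F i. B v w = 0)"

definition borel_lie :: "('k::field^'n \<Rightarrow> 'k^'n \<Rightarrow> 'k) \<Rightarrow> nat \<Rightarrow> (nat \<Rightarrow> ('k^'n) set) \<Rightarrow> ('k^'n^'n) set" where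
  "borel_lie B m F = {x\<in>sp_alg B. \<forall>i\<le>2*m. \<forall>v\<in>F i. x *v v \<in> F i}"

definition nilcone_dual :: "('k::field^'n \<Rightarrow> 'k^'n \<Rightarrow> 'k) \<Rightarrow> nat \<Rightarrow> ('k^'n^'n \<Rightarrow> 'k) set" where
  "nilcone_dual B m = {\<xi>. dual_elem B \<xi> \<and>
      (\<exists>F. iso_flag B m F \<and> (\<forall>x\<in>borel_lie B m F. \<xi> x = 0))}"

end

theory Submission
  imports Defs
begin

interpretation mvec: vector_space "mat_scale :: 'k::field \<Rightarrow> 'k^'n^'n \<Rightarrow> _"
  by unfold_locales (auto simp: mat_scale_def vec_eq_iff algebra_simps)

interpretation mvp: vector_space_pair "mat_scale :: 'k::field \<Rightarrow> 'k^'n^'n \<Rightarrow> _" "(*) :: 'k \<Rightarrow> 'k \<Rightarrow> 'k" ..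

definition Emat :: "'n \<Rightarrow> 'n \<Rightarrow> 'k::field^'n^'n" where
  "Emat i j = (\<chi> a b. if a = i \<and> b = j then 1 else 0)"

lemma if_and: "(if a \<and> b then c else 0) = (if a then (if b then c else 0) else (0::'a::zero))"
  by simp

lemma mat_scale_mult: "mat_scale c x *v v = c *s (x *v v)"
  by (simp add: mat_scale_def matrix_vector_mult_def vec_eq_iff sum_distrib_left mult.assoc)

lemma bf_0l: assumes "bilinear_form B" shows "B 0 w = 0"
proof -
  have "B (0 + 0) w = B 0 w + B 0 w" using assms unfolding bilinear_form_def by blast
  then have "B 0 w = B 0 w + B 0 w" by simp
  then show ?thesis using add_cancel_right_right[of "B 0 w" "B 0 w"] by simp
qed
lemma bf_0r: assumes "bilinear_form B" shows "B w 0 = 0"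
proof -
  have "B w (0 + 0) = B w 0 + B w 0" using assms unfolding bilinear_form_def by blast
  then have "B w 0 = B w 0 + B w 0" by simp
  then show ?thesis using add_cancel_right_right[of "B w 0" "B w 0"] by simp
qed
lemma bf_addl: "bilinear_form B \<Longrightarrow> B (u + v) w = B u w + B v w"
  unfolding bilinear_form_def by blast
lemma bf_addr: "bilinear_form B \<Longrightarrow> B w (u + v) = B w u + B w v"
  unfolding bilinear_form_def by blast
lemma bf_scl: "bilinear_form B \<Longrightarrow> B (c *s v) w = c * B v w"
  unfolding bilinear_form_def by blast
lemma bf_scr: "bilinear_form B \<Longrightarrow> B w (c *s v) = c * B w v"
  unfolding bilinear_form_def by blast
lemma bf_negl: "bilinear_form B \<Longrightarrow> B (- v) w = - B v w"
  using bf_scl[of B "-1" v w] by simp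
lemma bf_negr: "bilinear_form B \<Longrightarrow> B w (- v) = - B w v"
  using bf_scr[of B w "-1" v] by simp
lemma bf_suml: "bilinear_form B \<Longrightarrow> B (\<Sum>i\<in>I. f i) w = (\<Sum>i\<in>I. B (f i) w)"
  by (induction I rule: infinite_finite_induct) (auto simp: bf_0l bf_addl)
lemma bf_sumr: "bilinear_form B \<Longrightarrow> B w (\<Sum>i\<in>I. f i) = (\<Sum>i\<in>I. B w (f i))"
  by (induction I rule: infinite_finite_induct) (auto simp: bf_0r bf_addr)
lemma symp_bf: "symplectic_form B \<Longrightarrow> bilinear_form B"
  by (simp add: symplectic_form_def)
lemma symp_skew: assumes "symplectic_form B" shows "B v w = - B w v"
proof -
  have b: "bilinear_form B" using assms by (simp add: symplectic_form_def)
  have "0 = B (v + w) (v + w)" using assms by (simp add: symplectic_form_def)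
  also have "\<dots> = B v v + B v w + B w v + B w w" using b by (simp add: bf_addl bf_addr)
  also have "\<dots> = B v w + B w v" using assms by (simp add: symplectic_form_def)
  finally show ?thesis by (simp add: eq_neg_iff_add_eq_0)
qed

lemma mat_expand: "(M::'k::field^'n^'n) = (\<Sum>i\<in>UNIV. \<Sum>j\<in>UNIV. mat_scale (M$i$j) (Emat i j))"
proof -
  have "\<And>a b. (\<Sum>i\<in>UNIV. \<Sum>j\<in>UNIV. mat_scale (M$i$j) (Emat i j)) $ a $ b = M $ a $ b"
  proof -
    fix a b
    have "\<And>i. (\<Sum>j\<in>UNIV. (mat_scale (M$i$j) (Emat i j)) $ a $ b) = (if i = a then M $ a $ b else 0)"
    proof -
      fix i
      have "(\<Sum>j\<in>UNIV. (mat_scale (M$i$j) (Emat i j)) $ a $ b) = (\<Sum>j\<in>UNIV. if j = b then (if i = a then M$i$j else 0) else 0)"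
        by (rule sum.cong) (auto simp: mat_scale_def Emat_def)
      then show "?thesis i" by simp
    qed
    then show "(\<Sum>i\<in>UNIV. \<Sum>j\<in>UNIV. mat_scale (M$i$j) (Emat i j)) $ a $ b = M $ a $ b"
      by (simp add: sum_component)
  qed
  then show ?thesis by (simp add: vec_eq_iff)
qed

lemma linear_matrix_functional:
  assumes "Vector_Spaces.linear (mat_scale :: 'k::field \<Rightarrow> 'k^'n^'n \<Rightarrow> _) (*) g"
  shows "g M = trace ((\<chi> j i. g (Emat i j)) ** M)"
proof -
  interpret l: Vector_Spaces.linear "mat_scale :: 'k::field \<Rightarrow> 'k^'n^'n \<Rightarrow> _" "(*)" g by fact
  have "g M = g (\<Sum>i\<in>UNIV. \<Sum>j\<in>UNIV. mat_scale (M$i$j) (Emat i j))"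
    using mat_expand[of M] by simp
  also have "\<dots> = (\<Sum>i\<in>UNIV. \<Sum>j\<in>UNIV. M$i$j * g (Emat i j))"
    by (simp add: l.sum l.scale)
  also have "\<dots> = trace ((\<chi> j i. g (Emat i j)) ** M)"
    apply (simp add: trace_def matrix_matrix_mult_def)
    apply (subst sum.swap) by (simp add: mult.commute)
  finally show ?thesis .
qed

lemma sp_subspace: assumes b: "bilinear_form B" shows "mvec.subspace (sp_alg B)"
proof -
  have 1: "0 \<in> sp_alg B" using b by (simp add: sp_alg_def bf_0l bf_0r)
  have 2: "x + y \<in> sp_alg B" if "x \<in> sp_alg B" "y \<in> sp_alg B" for x y
  proof -
    { fix v w
      have "B ((x + y) *v v) w + B v ((x + y) *v w) = 0"
        using that b unfolding sp_alg_def
        by (simp add: matrix_vector_mult_add_rdistrib bf_addl bf_addr algebra_simps) }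
    then show ?thesis by (simp add: sp_alg_def)
  qed
  have 3: "mat_scale c x \<in> sp_alg B" if "x \<in> sp_alg B" for c x
  proof -
    { fix v w
      have "B (mat_scale c x *v v) w + B v (mat_scale c x *v w) = c * (B (x *v v) w + B v (x *v w))"
        using b by (simp add: mat_scale_mult bf_scl bf_scr distrib_left)
      then have "B (mat_scale c x *v v) w + B v (mat_scale c x *v w) = 0"
        using that by (simp add: sp_alg_def) }
    then show ?thesis by (simp add: sp_alg_def)
  qed
  show ?thesis unfolding mvec.subspace_def using 1 2 3 by blast
qed

lemma trace_rep_exists:
  assumes b: "bilinear_form B" and d: "dual_elem B \<xi>"
  shows "\<exists>X. \<forall>x\<in>sp_alg B. \<xi> x = trace (X ** x)"
proof -
  obtain Bs where Bs: "Bs \<subseteq> sp_alg B" "mvec.independent Bs" "sp_alg B \<subseteq> mvec.span Bs"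
    "card Bs = mvec.dim (sp_alg B)"
    by (rule mvec.basis_exists[of "sp_alg B"])
  from mvp.linear_independent_extend[OF Bs(2), of \<xi>]
  obtain g where g: "Vector_Spaces.linear (mat_scale :: 'a \<Rightarrow> 'a^'b^'b \<Rightarrow> _) (*) g" "\<forall>x\<in>Bs. g x = \<xi> x"
    by (elim exE conjE)
  note L = Vector_Spaces.linear_iff[THEN iffD1, OF g(1)]
  have ladd': "\<forall>x y. g (x + y) = g x + g y" by (rule L[THEN conjunct2, THEN conjunct2, THEN conjunct1])
  have lsc': "\<forall>c x. g (mat_scale c x) = c * g x" by (rule L[THEN conjunct2, THEN conjunct2, THEN conjunct2])
  note ladd = ladd'[rule_format] and lsc = lsc'[rule_format]
  have lz: "g 0 = 0"
  proof -
    have "mat_scale 0 (0::'a^'b^'b) = 0" by (simp add: mat_scale_def vec_eq_iff)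
    then show ?thesis using lsc[of 0 0] by simp
  qed
  let ?P = "{x \<in> sp_alg B. g x = \<xi> x}"
  have sub: "mvec.subspace (sp_alg B)" by (rule sp_subspace[OF b])
  have z: "\<xi> 0 = 0"
  proof -
    have "mat_scale 0 (0::'a^'b^'b) = 0" by (simp add: mat_scale_def vec_eq_iff)
    moreover have "(0::'a^'b^'b) \<in> sp_alg B" using sub by (rule mvec.subspace_0)
    moreover have "\<xi> (mat_scale 0 0) = 0 * \<xi> 0"
      using d \<open>(0::'a^'b^'b) \<in> sp_alg B\<close> unfolding dual_elem_def by blast
    ultimately show ?thesis by simp
  qed
  have "mvec.subspace ?P"
    unfolding mvec.subspace_def
  proof (intro conjI ballI allI)
    show "0 \<in> ?P" using mvec.subspace_0[OF sub] z lz by simp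
    fix x y assume xy: "x \<in> ?P" "y \<in> ?P"
    then have "\<xi> (x + y) = \<xi> x + \<xi> y" using d unfolding dual_elem_def by blast
    then show "x + y \<in> ?P" using xy mvec.subspace_add[OF sub] ladd by simp
  next
    fix c x assume xy: "x \<in> ?P"
    then have "\<xi> (mat_scale c x) = c * \<xi> x" using d unfolding dual_elem_def by blast
    then show "mat_scale c x \<in> ?P" using xy mvec.subspace_scale[OF sub] lsc by simp
  qed
  moreover have "Bs \<subseteq> ?P"
  proof
    fix x assume "x \<in> Bs"
    then show "x \<in> ?P" using Bs(1) g(2) by blast
  qed
  ultimately have sP: "mvec.span Bs \<subseteq> ?P" by (intro mvec.span_minimal)
  have "\<forall>x\<in>sp_alg B. \<xi> x = g x"
  proof
    fix x assume "x \<in> sp_alg B"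
    then have "x \<in> ?P" using Bs(3) sP by blast
    then show "\<xi> x = g x" by simp
  qed
  then have "\<forall>x\<in>sp_alg B. \<xi> x = trace ((\<chi> j i. g (Emat i j)) ** x)"
    using linear_matrix_functional[OF g(1)] by metis
  then show ?thesis by (rule exI)
qed

definition R1 :: "('k::field^'n \<Rightarrow> 'k^'n \<Rightarrow> 'k) \<Rightarrow> 'k^'n \<Rightarrow> 'k^'n \<Rightarrow> 'k^'n^'n" where
  "R1 B a b = (\<chi> i j. b$i * B a (axis j 1))"

lemma R1_mult: assumes b: "bilinear_form B" shows "R1 B a c *v u = B a u *s c"
proof -
  have "B a u = B a (\<Sum>j\<in>UNIV. u$j *s axis j 1)" by (simp add: basis_expansion)
  also have "\<dots> = (\<Sum>j\<in>UNIV. u$j * B a (axis j 1))" using b by (simp add: bf_sumr bf_scr)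
  finally have e: "B a u = (\<Sum>j\<in>UNIV. u$j * B a (axis j 1))" .
  show ?thesis
    by (simp add: vec_eq_iff R1_def matrix_vector_mult_def e sum_distrib_left mult.commute mult.left_commute)
qed

lemma trace_R1: assumes b: "bilinear_form B" shows "trace (X ** R1 B a c) = B a (X *v c)"
proof -
  have "B a (X *v c) = B a (\<Sum>i\<in>UNIV. (X *v c)$i *s axis i 1)" by (simp add: basis_expansion)
  also have "\<dots> = (\<Sum>i\<in>UNIV. (X *v c)$i * B a (axis i 1))" using b by (simp add: bf_sumr bf_scr)
  also have "\<dots> = trace (X ** R1 B a c)"
    by (simp add: trace_def matrix_matrix_mult_def R1_def matrix_vector_mult_def sum_distrib_right mult.assoc)
  finally show ?thesis by simp
qed

lemma trace_sum: fixes X :: "'a::comm_ring_1^'n^'n" shows "trace (X ** (\<Sum>i\<in>I. g i)) = (\<Sum>i\<in>I. trace (X ** g i))"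
proof (induction I rule: infinite_finite_induct)
  case (infinite A) then show ?case by (simp add: trace_def matrix_matrix_mult_def)
next
  case empty then show ?case by (simp add: trace_def matrix_matrix_mult_def)
next
  case (insert x F) then show ?case by (simp add: matrix_add_ldistrib trace_add)
qed

lemma sum_mult_vec: "(\<Sum>i\<in>I. g i) *v u = (\<Sum>i\<in>I. g i *v u)"
proof (induction I rule: infinite_finite_induct)
  case (infinite A) then show ?case by (simp add: matrix_vector_mult_def vec_eq_iff)
next
  case empty then show ?case by (simp add: matrix_vector_mult_def vec_eq_iff)
next
  case (insert x F) then show ?case by (simp add: matrix_vector_mult_add_rdistrib)
qed

lemma sum_antisym:
  fixes h :: "'a \<Rightarrow> 'a \<Rightarrow> 'b::comm_ring"
  assumes "finite I" "\<forall>k\<in>I. \<forall>l\<in>I. h k l + h l k = 0" "\<forall>k\<in>I. h k k = 0"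
  shows "(\<Sum>k\<in>I. \<Sum>l\<in>I. h k l) = 0"
  using assms
proof (induction I rule: finite_induct)
  case empty then show ?case by simp
next
  case (insert a I)
  have "(\<Sum>k\<in>insert a I. \<Sum>l\<in>insert a I. h k l)
      = h a a + (\<Sum>l\<in>I. h a l) + ((\<Sum>k\<in>I. h k a) + (\<Sum>k\<in>I. \<Sum>l\<in>I. h k l))"
    using insert(1,2) by (simp add: sum.distrib add.assoc)
  moreover have "(\<Sum>k\<in>I. \<Sum>l\<in>I. h k l) = 0" using insert by auto
  moreover have "(\<Sum>l\<in>I. h a l) + (\<Sum>k\<in>I. h k a) = (\<Sum>l\<in>I. h a l + h l a)" by (simp add: sum.distrib)
  moreover have "(\<Sum>l\<in>I. h a l + h l a) = 0" using insert(4) by (intro sum.neutral) auto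
  ultimately show ?case using insert(5) by (simp add: add.assoc)
qed

lemma flag_facts: assumes "iso_flag B m F"
  shows "F 0 = {0}" "F (2*m) = UNIV" "\<forall>i\<le>2*m. vec.subspace (F i) \<and> vec.dim (F i) = i"
    "\<forall>i<2*m. F i \<subset> F (Suc i)" "\<forall>i\<le>2*m. F (2*m - i) = perp B (F i)"
    "\<forall>i\<le>m. \<forall>v\<in>F i. \<forall>w\<in>F i. B v w = 0"
  using assms unfolding iso_flag_def by auto

lemma flag_sub:
  assumes f: "iso_flag B m F" and "i \<le> j" "j \<le> 2*m"
  shows "F i \<subseteq> F j"
  using assms(2,3)
proof (induction j)
  case 0 then show ?case by simp
next
  case (Suc j)
  show ?case
  proof (cases "i = Suc j")
    case True then show ?thesis by simp
  next
    case False
    then have "F i \<subseteq> F j" using Suc by auto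
    moreover have "F j \<subset> F (Suc j)" using flag_facts(4)[OF f] Suc(3) by simp
    ultimately show ?thesis by auto
  qed
qed

lemma flag_perp:
  assumes f: "iso_flag B m F" and "i \<le> 2*m"
  shows "F (2*m - i) = perp B (F i)"
  using flag_facts(5)[OF f] assms(2) by blast

lemma flag_perpD:
  assumes f: "iso_flag B m F" and "i \<le> 2*m" "v \<in> F i" "w \<in> F (2*m - i)"
  shows "B v w = 0"
  using flag_perp[OF f assms(2)] assms(3,4) unfolding perp_def by blast

lemma flag_subspace:
  assumes f: "iso_flag B m F" and "i \<le> 2*m"
  shows "vec.subspace (F i)"
  using flag_facts(3)[OF f] assms(2) by blast

lemma flag_dim:
  assumes f: "iso_flag B m F" and "i \<le> 2*m"
  shows "vec.dim (F i) = i"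
  using flag_facts(3)[OF f] assms(2) by blast

lemma flag_iso:
  assumes f: "iso_flag B m F" and "i \<le> m" "v \<in> F i" "w \<in> F i"
  shows "B v w = 0"
  using flag_facts(6)[OF f] assms(2-4) by blast

lemma flag_strict:
  assumes f: "iso_flag B m F" and "i < 2*m"
  shows "\<exists>v. v \<in> F (Suc i) \<and> v \<notin> F i"
  using flag_facts(4)[OF f] assms(2) by blast

lemma flag_top: "iso_flag B m F \<Longrightarrow> F (2*m) = UNIV"
  by (rule flag_facts(2))

lemma bf_kernel_subspace: assumes b: "bilinear_form B" shows "vec.subspace {w. B a w = 0}"
  unfolding vec.subspace_def using b by (simp add: bf_0r bf_addr bf_scr)

lemma bf_span_zero:
  assumes b: "bilinear_form B" and "\<forall>v\<in>S. B a v = 0" and "w \<in> vec.span S"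
  shows "B a w = 0"
proof -
  have "S \<subseteq> {w. B a w = 0}" using assms(2) by blast
  then have "vec.span S \<subseteq> {w. B a w = 0}" using bf_kernel_subspace[OF b] by (rule vec.span_minimal)
  then show ?thesis using assms(3) by blast
qed

lemma exists_e:
  assumes f: "iso_flag B m F"
  shows "\<exists>e. \<forall>k\<in>{1..2*m}. e k \<in> F k \<and> e k \<notin> F (k - 1)"
proof -
  have "\<forall>k\<in>{1..2*m}. \<exists>v. v \<in> F k \<and> v \<notin> F (k - 1)"
  proof
    fix k assume k: "k \<in> {1..2*m}"
    then have "k - 1 < 2*m" "Suc (k - 1) = k" by auto
    then show "\<exists>v. v \<in> F k \<and> v \<notin> F (k - 1)" using flag_strict[OF f, of "k - 1"] by metis
  qed
  then show ?thesis by (rule bchoice)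
qed

lemma flag_basis_chain:
  assumes f: "iso_flag B m F"
    and e: "\<forall>k\<in>{1..2*m}. e k \<in> F k \<and> e k \<notin> F (k - 1)"
  shows "j \<le> 2*m \<Longrightarrow> vec.independent (e ` {1..j}) \<and> card (e ` {1..j}) = j \<and> e ` {1..j} \<subseteq> F j"
proof (induction j)
  case 0 then show ?case by (simp add: vec.independent_empty)
next
  case (Suc j)
  then have IH: "vec.independent (e ` {1..j})" "card (e ` {1..j}) = j" "e ` {1..j} \<subseteq> F j" by auto
  have "Suc j \<in> {1..2*m}" using Suc(2) by simp
  then have sj: "e (Suc j) \<in> F (Suc j)" "e (Suc j) \<notin> F j" using e by (metis diff_Suc_1)+
  have "vec.span (e ` {1..j}) \<subseteq> F j"
    using IH(3) flag_subspace[OF f, of j] Suc(2) by (intro vec.span_minimal) auto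
  then have ns: "e (Suc j) \<notin> vec.span (e ` {1..j})" using sj by blast
  then have nin: "e (Suc j) \<notin> e ` {1..j}" using vec.span_base by blast
  have eq: "e ` {1..Suc j} = insert (e (Suc j)) (e ` {1..j})"
    by (auto simp: atLeastAtMostSuc_conv)
  have "vec.independent (e ` {1..Suc j})" unfolding eq using ns IH(1) by (rule vec.independent_insertI)
  moreover have "card (e ` {1..Suc j}) = Suc j" unfolding eq using nin IH(2) by simp
  moreover have "F j \<subseteq> F (Suc j)" using flag_sub[OF f, of j "Suc j"] Suc(2) by simp
  then have "e ` {1..Suc j} \<subseteq> F (Suc j)" unfolding eq using IH(3) sj by blast
  ultimately show ?case by blast
qed

lemma flag_span:
  assumes f: "iso_flag B m F"
    and e: "\<forall>k\<in>{1..2*m}. e k \<in> F k \<and> e k \<notin> F (k - 1)"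
    and j: "j \<le> 2*m"
  shows "F j = vec.span (e ` {1..j})"
proof -
  note c = flag_basis_chain[OF f e j]
  have "F j \<subseteq> vec.span (e ` {1..j})"
    using c flag_dim[OF f j] by (intro vec.card_ge_dim_independent) auto
  moreover have "vec.span (e ` {1..j}) \<subseteq> F j"
    using c flag_subspace[OF f j] by (intro vec.span_minimal) auto
  ultimately show ?thesis by blast
qed

lemma exists_g:
  assumes s: "symplectic_form B" and f: "iso_flag B m F"
    and e: "\<forall>k\<in>{1..2*m}. e k \<in> F k \<and> e k \<notin> F (k - 1)"
    and k: "k \<in> {1..2*m}"
  shows "\<exists>g. (\<forall>l\<in>{1..2*m}. l < k \<longrightarrow> B g (e l) = 0) \<and> B g (e k) \<noteq> 0"
proof -
  have b: "bilinear_form B" using s by (rule symp_bf)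
  have lt: "2*m - k < 2*m" using k by auto
  obtain g where g: "g \<in> F (Suc (2*m - k))" "g \<notin> F (2*m - k)"
    using flag_strict[OF f lt] by blast
  have i1: "Suc (2*m - k) \<le> 2*m" using k by auto
  have i2: "2*m - Suc (2*m - k) = k - 1" using k by auto
  have z: "B g (e l) = 0" if l: "l \<in> {1..2*m}" "l < k" for l
  proof -
    have "e l \<in> F l" using e l(1) by blast
    moreover have "F l \<subseteq> F (k - 1)" using flag_sub[OF f, of l "k - 1"] l k by auto
    ultimately have "e l \<in> F (2*m - Suc (2*m - k))" unfolding i2 by blast
    then show ?thesis using flag_perpD[OF f i1 g(1)] by blast
  qed
  have nz: "B g (e k) \<noteq> 0"
  proof
    assume h: "B g (e k) = 0"
    have "\<forall>v\<in>e ` {1..k}. B g v = 0"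
    proof
      fix v assume "v \<in> e ` {1..k}"
      then obtain l where l: "l \<in> {1..k}" "v = e l" by blast
      show "B g v = 0"
      proof (cases "l = k")
        case True then show ?thesis using h l by simp
      next
        case False then show ?thesis using z[of l] l k by auto
      qed
    qed
    then have H: "\<forall>w\<in>F k. B g w = 0"
      using bf_span_zero[OF b] flag_span[OF f e, of k] k by (metis atLeastAtMost_iff)
    have "\<forall>w\<in>F k. B w g = 0"
    proof
      fix w assume "w \<in> F k"
      then have "B g w = 0" using H by blast
      then show "B w g = 0" using symp_skew[OF s, of w g] by simp
    qed
    then have "g \<in> perp B (F k)" unfolding perp_def by blast
    then have "g \<in> F (2*m - k)" using flag_perp[OF f, of k] k by auto
    then show False using g(2) by blast
  qed
  show ?thesis using z nz by blast
qed

lemma exists_dual_aux: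
  assumes s: "symplectic_form B" and f: "iso_flag B m F"
    and e: "\<forall>k\<in>{1..2*m}. e k \<in> F k \<and> e k \<notin> F (k - 1)"
  shows "d \<le> 2*m \<Longrightarrow> \<exists>fd. \<forall>k. 2*m - d < k \<and> k \<le> 2*m \<longrightarrow>
            (\<forall>l\<in>{1..2*m}. B (fd k) (e l) = (if k = l then 1 else 0))"
proof (induction d)
  case 0 then show ?case by auto
next
  case (Suc d)
  have b: "bilinear_form B" using s by (rule symp_bf)
  have dle: "d \<le> 2*m" using Suc.prems by simp
  from Suc.IH[OF dle] obtain fd where fd: "\<forall>k. 2*m - d < k \<and> k \<le> 2*m \<longrightarrow>
            (\<forall>l\<in>{1..2*m}. B (fd k) (e l) = (if k = l then 1 else 0))"
    by (elim exE)
  define k0 where "k0 = 2*m - d"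
  have k0: "k0 \<in> {1..2*m}" using Suc(2) by (auto simp: k0_def)
  obtain g where g: "\<forall>l\<in>{1..2*m}. l < k0 \<longrightarrow> B g (e l) = 0" "B g (e k0) \<noteq> 0"
    using exists_g[OF s f e k0] by blast
  define c where "c = B g (e k0)"
  define fk where "fk = (1 / c) *s (g - (\<Sum>l\<in>{k0+1..2*m}. B g (e l) *s fd l))"
  have fk: "B fk (e j) = (if k0 = j then 1 else 0)" if j: "j \<in> {1..2*m}" for j
  proof -
    have "(\<Sum>l\<in>{k0+1..2*m}. B (B g (e l) *s fd l) (e j))
        = (\<Sum>l\<in>{k0+1..2*m}. if l = j then B g (e j) else 0)"
    proof (rule sum.cong)
      fix l assume "l \<in> {k0+1..2*m}"
      then have "2*m - d < l \<and> l \<le> 2*m" by (auto simp: k0_def)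
      then have "B (fd l) (e j) = (if l = j then 1 else 0)" using fd[rule_format, of l j] j by blast
      then show "B (B g (e l) *s fd l) (e j) = (if l = j then B g (e j) else 0)"
        using b by (simp add: bf_scl)
    qed simp
    also have "\<dots> = (if j \<in> {k0+1..2*m} then B g (e j) else 0)" by simp
    finally have S: "(\<Sum>l\<in>{k0+1..2*m}. B (B g (e l) *s fd l) (e j)) = (if j \<in> {k0+1..2*m} then B g (e j) else 0)" .
    define Sm where "Sm = (\<Sum>l\<in>{k0+1..2*m}. B g (e l) *s fd l)"
    have "B fk (e j) = (1 / c) * B (g + - Sm) (e j)"
      unfolding fk_def Sm_def[symmetric] using bf_scl[OF b] by (simp only: diff_conv_add_uminus)
    also have "B (g + - Sm) (e j) = B g (e j) - B Sm (e j)"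
      by (simp only: bf_addl[OF b] bf_negl[OF b] diff_conv_add_uminus)
    also have "B Sm (e j) = (\<Sum>l\<in>{k0+1..2*m}. B (B g (e l) *s fd l) (e j))"
      unfolding Sm_def by (rule bf_suml[OF b])
    finally have "B fk (e j) = (1 / c) * (B g (e j) - (\<Sum>l\<in>{k0+1..2*m}. B (B g (e l) *s fd l) (e j)))" .
    also have "\<dots> = (if k0 = j then 1 else 0)"
    proof (cases "j < k0")
      case True then show ?thesis unfolding S using g(1) j by auto
    next
      case False
      show ?thesis
      proof (cases "j = k0")
        case True then show ?thesis unfolding S using g(2) by (simp add: c_def)
      next
        case False2: False
        then have "j \<in> {k0+1..2*m}" using False j by auto
        then show ?thesis unfolding S using False2 by simp
      qed
    qed
    finally show ?thesis .
  qed
  define fd' where "fd' = fd(k0 := fk)"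
  have "\<forall>k. 2*m - Suc d < k \<and> k \<le> 2*m \<longrightarrow>
            (\<forall>l\<in>{1..2*m}. B (fd' k) (e l) = (if k = l then 1 else 0))"
  proof (intro allI impI)
    fix k assume k: "2*m - Suc d < k \<and> k \<le> 2*m"
    show "\<forall>l\<in>{1..2*m}. B (fd' k) (e l) = (if k = l then 1 else 0)"
    proof (cases "k = k0")
      case True then show ?thesis using fk by (simp add: fd'_def)
    next
      case False
      then have "2*m - d < k" using k Suc(2) by (auto simp: k0_def)
      then show ?thesis using fd k False by (simp add: fd'_def)
    qed
  qed
  then show ?case by blast
qed

lemma adapted_basis:
  assumes s: "symplectic_form B" and f: "iso_flag B m F"
  obtains e fd where "\<forall>k\<in>{1..2*m}. e k \<in> F k" "\<forall>k\<in>{1..2*m}. fd k \<in> F (2*m + 1 - k)"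
    "\<forall>k\<in>{1..2*m}. \<forall>l\<in>{1..2*m}. B (fd k) (e l) = (if k = l then 1 else 0)"
    "\<forall>u. u = (\<Sum>k\<in>{1..2*m}. B (fd k) u *s e k)"
proof -
  have b: "bilinear_form B" using s by (rule symp_bf)
  obtain e where e: "\<forall>k\<in>{1..2*m}. e k \<in> F k \<and> e k \<notin> F (k - 1)"
    using exists_e[OF f] by (elim exE)
  from exists_dual_aux[OF s f e order_refl[of "2*m"]]
  obtain fd where fd0: "\<forall>k. 2*m - 2*m < k \<and> k \<le> 2*m \<longrightarrow>
            (\<forall>l\<in>{1..2*m}. B (fd k) (e l) = (if k = l then 1 else 0))"
    by (elim exE)
  have dual: "\<forall>k\<in>{1..2*m}. \<forall>l\<in>{1..2*m}. B (fd k) (e l) = (if k = l then 1 else 0)"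
  proof (intro ballI)
    fix k l assume k: "k \<in> {1..2*m}" and l: "l \<in> {1..2*m}"
    then have "2*m - 2*m < k \<and> k \<le> 2*m" by simp
    then show "B (fd k) (e l) = (if k = l then 1 else 0)" using fd0[rule_format, of k l] l by blast
  qed
  have loc: "\<forall>k\<in>{1..2*m}. fd k \<in> F (2*m + 1 - k)"
  proof
    fix k assume k: "k \<in> {1..2*m}"
    have km: "k - 1 \<le> 2*m" using k by auto
    have z: "\<forall>v\<in>e ` {1..k-1}. B (fd k) v = 0"
    proof
      fix v assume "v \<in> e ` {1..k-1}"
      then obtain l where l: "l \<in> {1..k-1}" "v = e l" by blast
      then have "l \<in> {1..2*m}" "l \<noteq> k" using k by auto
      then show "B (fd k) v = 0" using dual k l(2) by simp
    qed
    have "\<forall>w\<in>F (k-1). B w (fd k) = 0"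
    proof
      fix w assume "w \<in> F (k - 1)"
      then have "w \<in> vec.span (e ` {1..k-1})" using flag_span[OF f e km] by simp
      then have "B (fd k) w = 0" by (rule bf_span_zero[OF b z])
      then show "B w (fd k) = 0" using symp_skew[OF s, of w "fd k"] by simp
    qed
    then have "fd k \<in> perp B (F (k - 1))" unfolding perp_def by blast
    then have "fd k \<in> F (2*m - (k - 1))" using flag_perp[OF f km] by simp
    moreover have "2*m - (k - 1) = 2*m + 1 - k" using k by auto
    ultimately show "fd k \<in> F (2*m + 1 - k)" by simp
  qed
  have ch: "vec.independent (e ` {1..2*m}) \<and> card (e ` {1..2*m}) = 2*m \<and> e ` {1..2*m} \<subseteq> F (2*m)"
    using flag_basis_chain[OF f e] by simp
  have inj: "inj_on e {1..2*m}" using ch by (simp add: inj_on_iff_eq_card)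
  have exp: "u = (\<Sum>k\<in>{1..2*m}. B (fd k) u *s e k)" for u
  proof -
    have "u \<in> F (2*m)" using flag_top[OF f] by simp
    then have "u \<in> vec.span (e ` {1..2*m})" using flag_span[OF f e, of "2*m"] by simp
    then obtain c where c: "u = (\<Sum>v\<in>e ` {1..2*m}. c v *s v)"
      using vec.span_finite[of "e ` {1..2*m}"] by auto
    then have c2: "u = (\<Sum>k\<in>{1..2*m}. c (e k) *s e k)"
      using sum.reindex[OF inj, of "\<lambda>v. c v *s v"] by simp
    have "B (fd k) u = c (e k)" if k: "k \<in> {1..2*m}" for k
    proof -
      have "B (fd k) u = (\<Sum>l\<in>{1..2*m}. c (e l) * B (fd k) (e l))"
        by (subst c2) (simp add: bf_sumr[OF b] bf_scr[OF b])
      also have "\<dots> = (\<Sum>l\<in>{1..2*m}. if k = l then c (e l) else 0)"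
        using dual k by (intro sum.cong) auto
      also have "\<dots> = c (e k)" using k by simp
      finally show ?thesis .
    qed
    then have "(\<Sum>k\<in>{1..2*m}. B (fd k) u *s e k) = (\<Sum>k\<in>{1..2*m}. c (e k) *s e k)"
      by (intro sum.cong) auto
    then show ?thesis using c2 by simp
  qed
  show ?thesis
    by (rule that[of e fd]) (use e loc dual exp in auto)
qed

lemma R1_sp: assumes s: "symplectic_form B" shows "R1 B v w + R1 B w v \<in> sp_alg B"
proof -
  have b: "bilinear_form B" using s by (rule symp_bf)
  { fix u z
    have "B ((R1 B v w + R1 B w v) *v u) z + B u ((R1 B v w + R1 B w v) *v z)
        = B v u * B w z + B w u * B v z + (B v z * B u w + B w z * B u v)"
      by (simp add: matrix_vector_mult_add_rdistrib R1_mult[OF b] bf_addl[OF b] bf_addr[OF b] bf_scl[OF b] bf_scr[OF b])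
    also have "\<dots> = 0" using symp_skew[OF s, of u w] symp_skew[OF s, of u v] by (simp add: algebra_simps)
    finally have "B ((R1 B v w + R1 B w v) *v u) z + B u ((R1 B v w + R1 B w v) *v z) = 0" . }
  then show ?thesis by (simp add: sp_alg_def)
qed

lemma R1_sp1: assumes s: "symplectic_form B" shows "R1 B v v \<in> sp_alg B"
proof -
  have b: "bilinear_form B" using s by (rule symp_bf)
  { fix u z
    have "B (R1 B v v *v u) z + B u (R1 B v v *v z) = B v u * B v z + B v z * B u v"
      by (simp add: R1_mult[OF b] bf_scl[OF b] bf_scr[OF b])
    also have "\<dots> = 0" using symp_skew[OF s, of u v] by (simp add: algebra_simps)
    finally have "B (R1 B v v *v u) z + B u (R1 B v v *v z) = 0" . }
  then show ?thesis by (simp add: sp_alg_def)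
qed

lemma f_expansion:
  assumes s: "symplectic_form B"
    and dual: "\<forall>k\<in>I. \<forall>l\<in>I. B (fd k) (e l) = (if k = l then 1 else 0)"
    and exp: "\<forall>u. u = (\<Sum>k\<in>I. B (fd k) u *s e k)"
    and fin: "finite I"
  shows "w = (\<Sum>k\<in>I. (- B (e k) w) *s fd k)"
proof -
  have b: "bilinear_form B" using s by (rule symp_bf)
  define w' where "w' = (\<Sum>k\<in>I. (- B (e k) w) *s fd k)"
  have el: "B w' (e l) = B w (e l)" if l: "l \<in> I" for l
  proof -
    have "B w' (e l) = (\<Sum>k\<in>I. - B (e k) w * B (fd k) (e l))"
      unfolding w'_def by (simp add: bf_suml[OF b] bf_scl[OF b] bf_negl[OF b])
    also have "\<dots> = (\<Sum>k\<in>I. if k = l then - B (e l) w else 0)"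
      using dual l by (intro sum.cong) auto
    also have "\<dots> = - B (e l) w" using l fin by simp
    also have "\<dots> = B w (e l)" using symp_skew[OF s, of "e l" w] by simp
    finally show ?thesis .
  qed
  have "\<forall>u. B (w' - w) u = 0"
  proof
    fix u
    have "u = (\<Sum>l\<in>I. B (fd l) u *s e l)" using exp by (rule spec)
    then have "B (w' - w) u = B (w' - w) (\<Sum>l\<in>I. B (fd l) u *s e l)" by (rule arg_cong)
    also have "\<dots> = (\<Sum>l\<in>I. B (fd l) u * B (w' - w) (e l))"
      by (simp only: bf_sumr[OF b] bf_scr[OF b])
    also have "\<dots> = 0"
    proof (rule sum.neutral, rule ballI)
      fix l assume "l \<in> I"
      have "B (w' - w) (e l) = B w' (e l) - B w (e l)"
        by (simp only: diff_conv_add_uminus bf_addl[OF b] bf_negl[OF b])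
      then show "B (fd l) u * B (w' - w) (e l) = 0" using el[OF \<open>l \<in> I\<close>] by simp
    qed
    finally show "B (w' - w) u = 0" .
  qed
  then have "w' - w = 0" using s unfolding symplectic_form_def by blast
  then show ?thesis unfolding w'_def by simp
qed

lemma beta_eq:
  assumes b: "bilinear_form B"
  shows "beta B \<xi> v w = B v (trace_rep B \<xi> *v w) + B w (trace_rep B \<xi> *v v)"
  unfolding beta_def alpha_def
  by (simp add: matrix_vector_right_distrib bf_addl[OF b] bf_addr[OF b] algebra_simps)

lemma R1_borel1:
  assumes s: "symplectic_form B" and f: "iso_flag B m F" and i: "i \<le> m" and v: "v \<in> F i"
  shows "R1 B v v \<in> borel_lie B m F"
proof -
  have b: "bilinear_form B" using s by (rule symp_bf)
  have "R1 B v v *v u \<in> F j" if j: "j \<le> 2*m" and u: "u \<in> F j" for j u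
  proof (cases "i \<le> j")
    case True
    then have "v \<in> F j" using flag_sub[OF f True j] v by blast
    then show ?thesis unfolding R1_mult[OF b] using vec.subspace_scale[OF flag_subspace[OF f j]] by blast
  next
    case False
    then have "u \<in> F i" using flag_sub[OF f, of j i] u i by auto
    then have "B v u = 0" using flag_iso[OF f i v] by blast
    then show ?thesis unfolding R1_mult[OF b] using vec.subspace_0[OF flag_subspace[OF f j]] by simp
  qed
  then show ?thesis using R1_sp1[OF s] unfolding borel_lie_def by blast
qed

lemma R1_borel2:
  assumes s: "symplectic_form B" and f: "iso_flag B m F" and i: "1 \<le> i" "i \<le> m"
    and v: "v \<in> F i" and w: "w \<in> F (2*m + 1 - i)"
  shows "R1 B v w + R1 B w v \<in> borel_lie B m F"
proof -
  have b: "bilinear_form B" using s by (rule symp_bf)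
  have "(R1 B v w + R1 B w v) *v u \<in> F j" if j: "j \<le> 2*m" and u: "u \<in> F j" for j u
  proof -
    have eq: "(R1 B v w + R1 B w v) *v u = B v u *s w + B w u *s v"
      by (simp add: matrix_vector_mult_add_rdistrib R1_mult[OF b])
    note sub = flag_subspace[OF f j]
    show ?thesis
    proof (cases "2*m + 1 - i \<le> j")
      case True
      then have "w \<in> F j" using flag_sub[OF f True j] w by blast
      moreover have "i \<le> j" using True i by linarith
      then have "v \<in> F j" using flag_sub[OF f, of i j] v j by blast
      ultimately show ?thesis unfolding eq
        using vec.subspace_scale[OF sub] vec.subspace_add[OF sub] by blast
    next
      case False
      then have "F j \<subseteq> F (2*m - i)" using flag_sub[OF f, of j "2*m - i"] i by auto
      then have "B v u = 0" using flag_perpD[OF f _ v, of u] u i by auto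
      moreover have "B w u *s v \<in> F j"
      proof (cases "i \<le> j")
        case True
        then have "v \<in> F j" using flag_sub[OF f True j] v by blast
        then show ?thesis using vec.subspace_scale[OF sub] by blast
      next
        case False
        then have "F j \<subseteq> F (2*m - (2*m + 1 - i))" using flag_sub[OF f, of j "i - 1"] i by auto
        then have "B w u = 0" using flag_perpD[OF f _ w, of u] u i by auto
        then show ?thesis using vec.subspace_0[OF sub] by simp
      qed
      ultimately show ?thesis unfolding eq by simp
    qed
  qed
  then show ?thesis using R1_sp[OF s] unfolding borel_lie_def by blast
qed

lemma backward_dir:
  assumes s: "symplectic_form B" and f: "iso_flag B m F"
    and hT: "\<forall>x\<in>sp_alg B. \<xi> x = trace (trace_rep B \<xi> ** x)"
    and C: "\<forall>i\<le>m. (\<forall>v\<in>F i. \<forall>w\<in>F (2*m + 1 - i). beta B \<xi> v w = 0) \<and>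
                 (\<forall>v\<in>F i. alpha B \<xi> v = 0)"
    and x: "x \<in> borel_lie B m F"
  shows "\<xi> x = 0"
proof -
  have b: "bilinear_form B" using s by (rule symp_bf)
  define T where "T = trace_rep B \<xi>"
  define I where "I = {1..2*m}"
  have fin: "finite I" by (simp add: I_def)
  obtain e fd where e: "\<forall>k\<in>{1..2*m}. e k \<in> F k" and fdl: "\<forall>k\<in>{1..2*m}. fd k \<in> F (2*m + 1 - k)"
    and dual: "\<forall>k\<in>{1..2*m}. \<forall>l\<in>{1..2*m}. B (fd k) (e l) = (if k = l then 1 else 0)"
    and exp: "\<forall>u. u = (\<Sum>k\<in>{1..2*m}. B (fd k) u *s e k)"
    by (rule adapted_basis[OF s f])
  have xsp: "x \<in> sp_alg B" and xfl: "\<forall>i\<le>2*m. \<forall>v\<in>F i. x *v v \<in> F i"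
    using x unfolding borel_lie_def by auto
  define S where "S k l = B (e k) (x *v e l)" for k l
  define t where "t a c = B a (T *v c)" for a c
  have fexp: "\<And>w. w = (\<Sum>k\<in>I. (- B (e k) w) *s fd k)"
    using f_expansion[OF s _ _ fin, of fd e] dual exp unfolding I_def by blast
  have dec: "x = (\<Sum>k\<in>I. \<Sum>l\<in>I. R1 B ((- S k l) *s fd l) (fd k))"
  proof (subst matrix_eq, rule allI)
    fix u
    have inner: "(\<Sum>l\<in>I. S k l * B (fd l) u) = B (e k) (x *v u)" for k
    proof -
      have "x *v u = x *v (\<Sum>l\<in>I. B (fd l) u *s e l)" using exp unfolding I_def by metis
      also have "\<dots> = (\<Sum>l\<in>I. B (fd l) u *s (x *v e l))"
        by (simp add: vec.sum vector_scalar_commute)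
      finally have "B (e k) (x *v u) = B (e k) (\<Sum>l\<in>I. B (fd l) u *s (x *v e l))" by simp
      also have "\<dots> = (\<Sum>l\<in>I. B (fd l) u * S k l)"
        by (simp only: bf_sumr[OF b] bf_scr[OF b] S_def)
      finally show ?thesis by (simp add: mult.commute)
    qed
    have "(\<Sum>k\<in>I. \<Sum>l\<in>I. R1 B ((- S k l) *s fd l) (fd k)) *v u
        = (\<Sum>k\<in>I. \<Sum>l\<in>I. R1 B ((- S k l) *s fd l) (fd k) *v u)"
      by (simp only: sum_mult_vec)
    also have "\<dots> = (\<Sum>k\<in>I. \<Sum>l\<in>I. (- (S k l * B (fd l) u)) *s fd k)"
      by (simp only: R1_mult[OF b] bf_scl[OF b] mult_minus_left)
    also have "\<dots> = (\<Sum>k\<in>I. (- (\<Sum>l\<in>I. S k l * B (fd l) u)) *s fd k)"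
      by (simp only: sum_negf[symmetric] vec.scale_sum_left)
    also have "\<dots> = (\<Sum>k\<in>I. (- B (e k) (x *v u)) *s fd k)"
      by (simp only: inner)
    also have "\<dots> = x *v u" by (rule fexp[symmetric])
    finally show "x *v u = (\<Sum>k\<in>I. \<Sum>l\<in>I. R1 B ((- S k l) *s fd l) (fd k)) *v u" by simp
  qed
  have "\<xi> x = trace (T ** x)" using hT xsp unfolding T_def by blast
  also have "\<dots> = (\<Sum>k\<in>I. \<Sum>l\<in>I. trace (T ** R1 B ((- S k l) *s fd l) (fd k)))"
    by (subst dec) (simp only: trace_sum)
  also have "\<dots> = (\<Sum>k\<in>I. \<Sum>l\<in>I. - (S k l * t (fd l) (fd k)))"
    by (simp only: trace_R1[OF b] bf_scl[OF b] t_def mult_minus_left)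
  also have "\<dots> = - (\<Sum>k\<in>I. \<Sum>l\<in>I. S k l * t (fd l) (fd k))"
    by (simp only: sum_negf)
  also have "(\<Sum>k\<in>I. \<Sum>l\<in>I. S k l * t (fd l) (fd k)) = 0"
  proof (rule sum_antisym[OF fin])
    have Ssym: "S l k = S k l" if "k \<in> I" "l \<in> I" for k l
    proof -
      have "B (x *v e l) (e k) + B (e l) (x *v e k) = 0" using xsp unfolding sp_alg_def by blast
      then show ?thesis unfolding S_def using symp_skew[OF s, of "e k" "x *v e l"] by (simp add: add_eq_0_iff)
    qed
    have S0: "S k l = 0" if "k \<in> I" "l \<in> I" "k + l \<le> 2*m" for k l
    proof -
      have l: "l \<le> 2*m" "e l \<in> F l" using that e unfolding I_def by auto
      then have xe: "x *v e l \<in> F l" using xfl by blast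
      have "e k \<in> F k" using that e unfolding I_def by auto
      moreover have "F k \<subseteq> F (2*m - l)" using flag_sub[OF f, of k "2*m - l"] that by auto
      ultimately have "B (x *v e l) (e k) = 0" using flag_perpD[OF f l(1) xe] by blast
      then show ?thesis unfolding S_def using symp_skew[OF s, of "e k" "x *v e l"] by simp
    qed
    have tb: "t a c + t c a = beta B \<xi> a c" for a c
      unfolding t_def T_def using beta_eq[OF b] by simp
    have big: "beta B \<xi> (fd l) (fd k) = 0" if kl: "k \<in> I" "l \<in> I" "\<not> k + l \<le> 2*m" "l \<le> k" for k l
    proof -
      define i where "i = 2*m + 1 - k"
      have im: "i \<le> m" "2*m + 1 - i = k" using kl unfolding i_def I_def by auto
      have "fd k \<in> F i" using fdl kl unfolding i_def I_def by auto
      moreover have "fd l \<in> F (2*m + 1 - i)"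
      proof -
        have "fd l \<in> F (2*m + 1 - l)" using fdl kl unfolding I_def by auto
        moreover have "F (2*m + 1 - l) \<subseteq> F k" using flag_sub[OF f, of "2*m + 1 - l" k] kl unfolding I_def by auto
        ultimately show ?thesis using im by auto
      qed
      ultimately have "beta B \<xi> (fd k) (fd l) = 0" using C im(1) by blast
      then show ?thesis using tb[of "fd k" "fd l"] tb[of "fd l" "fd k"] by (simp add: add.commute)
    qed
    show "\<forall>k\<in>I. \<forall>l\<in>I. S k l * t (fd l) (fd k) + S l k * t (fd k) (fd l) = 0"
    proof (intro ballI)
      fix k l assume kl: "k \<in> I" "l \<in> I"
      have "S k l * t (fd l) (fd k) + S l k * t (fd k) (fd l) = S k l * beta B \<xi> (fd l) (fd k)"
        using Ssym[OF kl] tb[of "fd l" "fd k"] by (simp flip: distrib_left)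
      also have "\<dots> = 0"
      proof (cases "k + l \<le> 2*m")
        case True then show ?thesis using S0 kl by simp
      next
        case False
        show ?thesis
        proof (cases "l \<le> k")
          case True then show ?thesis using big[OF kl False] by simp
        next
          case False2: False
          have "beta B \<xi> (fd k) (fd l) = 0" using big[of l k] kl False False2 by (simp add: add.commute)
          then show ?thesis using tb[of "fd k" "fd l"] tb[of "fd l" "fd k"] by (simp add: add.commute)
        qed
      qed
      finally show "S k l * t (fd l) (fd k) + S l k * t (fd k) (fd l) = 0" .
    qed
    show "\<forall>k\<in>I. S k k * t (fd k) (fd k) = 0"
    proof
      fix k assume k: "k \<in> I"
      show "S k k * t (fd k) (fd k) = 0"
      proof (cases "k + k \<le> 2*m")
        case True then show ?thesis using S0 k by simp
      next
        case False
        define i where "i = 2*m + 1 - k"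
        have im: "i \<le> m" using False unfolding i_def by auto
        have "fd k \<in> F i" using fdl k unfolding i_def I_def by auto
        then have "alpha B \<xi> (fd k) = 0" using C im by blast
        then show ?thesis unfolding t_def T_def alpha_def by simp
      qed
    qed
  qed
  finally show ?thesis by simp
qed

theorem lemma3p2:
  fixes B :: "'k::alg_closed_field^'n \<Rightarrow> 'k^'n \<Rightarrow> 'k"
    and m :: nat
    and \<xi> :: "'k^'n^'n \<Rightarrow> 'k"
    and F :: "nat \<Rightarrow> ('k^'n) set"
  assumes "CHAR('k) = 2"
    and "CARD('n) = 2 * m"
    and "symplectic_form B"
    and "\<xi> \<in> nilcone_dual B m"
    and "iso_flag B m F"
  shows "(\<forall>x\<in>borel_lie B m F. \<xi> x = 0) \<longleftrightarrow>
         (\<forall>i\<le>m. (\<forall>v\<in>F i. \<forall>w\<in>F (2*m + 1 - i). beta B \<xi> v w = 0) \<and>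
                 (\<forall>v\<in>F i. alpha B \<xi> v = 0))"
proof -
  note s = assms(3) and f = assms(5)
  have b: "bilinear_form B" using s by (rule symp_bf)
  have d: "dual_elem B \<xi>" using assms(4) unfolding nilcone_dual_def by blast
  have ex: "\<exists>X. \<forall>x\<in>sp_alg B. \<xi> x = trace (X ** x)" by (rule trace_rep_exists[OF b d])
  have hT: "\<forall>x\<in>sp_alg B. \<xi> x = trace (trace_rep B \<xi> ** x)"
    unfolding trace_rep_def by (rule someI_ex[OF ex])
  define T where "T = trace_rep B \<xi>"
  show ?thesis
  proof
    assume H: "\<forall>x\<in>borel_lie B m F. \<xi> x = 0"
    show "\<forall>i\<le>m. (\<forall>v\<in>F i. \<forall>w\<in>F (2*m + 1 - i). beta B \<xi> v w = 0) \<and>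
                 (\<forall>v\<in>F i. alpha B \<xi> v = 0)"
    proof (intro allI impI conjI ballI)
      fix i v assume i: "i \<le> m" and v: "v \<in> F i"
      have x: "R1 B v v \<in> borel_lie B m F" by (rule R1_borel1[OF s f i v])
      then have "R1 B v v \<in> sp_alg B" unfolding borel_lie_def by blast
      then have "\<xi> (R1 B v v) = B v (T *v v)" using hT trace_R1[OF b] unfolding T_def by metis
      then show "alpha B \<xi> v = 0" using H x unfolding alpha_def T_def by simp
    next
      fix i v w assume i: "i \<le> m" and v: "v \<in> F i" and w: "w \<in> F (2*m + 1 - i)"
      show "beta B \<xi> v w = 0"
      proof (cases "i = 0")
        case True
        then have "v = 0" using v flag_facts(1)[OF f] by simp
        then show ?thesis using beta_eq[OF b, of \<xi> v w] by (simp add: bf_0l[OF b] bf_0r[OF b])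
      next
        case False
        then have i1: "1 \<le> i" by simp
        have x: "R1 B v w + R1 B w v \<in> borel_lie B m F" by (rule R1_borel2[OF s f i1 i v w])
        then have "R1 B v w + R1 B w v \<in> sp_alg B" unfolding borel_lie_def by blast
        then have "\<xi> (R1 B v w + R1 B w v) = trace (T ** (R1 B v w + R1 B w v))"
          using hT unfolding T_def by blast
        also have "\<dots> = B v (T *v w) + B w (T *v v)"
          by (simp only: matrix_add_ldistrib trace_add trace_R1[OF b])
        also have "\<dots> = beta B \<xi> v w" using beta_eq[OF b, of \<xi> v w] unfolding T_def by simp
        finally show ?thesis using H x by simp
      qed
    qed
  next
    assume C: "\<forall>i\<le>m. (\<forall>v\<in>F i. \<forall>w\<in>F (2*m + 1 - i). beta B \<xi> v w = 0) \<and>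
                 (\<forall>v\<in>F i. alpha B \<xi> v = 0)"
    show "\<forall>x\<in>borel_lie B m F. \<xi> x = 0"
      using backward_dir[OF s f hT C] by blast
  qed
qed

end
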